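(* Let $P$ be the uniform distribution on $[0,1]$ and $\beta=\{\frac14,\frac12\}$. The conditional optimal set of two-points for $P$ with respect to $\beta$ is $\beta$, and $V_2=\frac{37}{768}$ ($\approx0.0481771$).
   Context: For a Borel probability measure $P$ on $\mathbb{R}$ and finite $\beta$ with $\mathrm{card}(\beta)=r$, for $n\ge r$, $V_n=\inf\{\int\min_{a\in\alpha\cup\beta}(x-a)^2dP(x):\mathrm{card}(\alpha)\le n-r\}$; a set $\alpha\cup\beta$ attaining the infimum, with each point of $\beta$ having a Voronoi region of positive $P$-measure, is a conditional optimal set of $n$-points with respect to $\beta$. *)

theory Defs
  imports "HOL-Probability.Probability"
begin

definition distortion :: "real measure \<Rightarrow> real set \<Rightarrow> real" where
  "distortion P A = (\<integral>x. Min ((\<lambda>a. (x - a)\<^sup>2) ` A) \<partial>P)"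

definition cond_V :: "real measure \<Rightarrow> real set \<Rightarrow> nat \<Rightarrow> real" where
  "cond_V P \<beta> n = (INF \<alpha> \<in> {\<alpha>. finite \<alpha> \<and> card \<alpha> \<le> n - card \<beta>}. distortion P (\<alpha> \<union> \<beta>))"

definition voronoi :: "real set \<Rightarrow> real \<Rightarrow> real set" where
  "voronoi S a = {x. \<forall>b\<in>S. \<bar>x - a\<bar> \<le> \<bar>x - b\<bar>}"

definition cond_optimal_set :: "real measure \<Rightarrow> real set \<Rightarrow> nat \<Rightarrow> real set \<Rightarrow> bool" where
  "cond_optimal_set P \<beta> n S \<longleftrightarrow> finite \<beta> \<and> card \<beta> \<le> n \<and>
     (\<exists>\<alpha>. finite \<alpha> \<and> card \<alpha> \<le> n - card \<beta> \<and> S = \<alpha> \<union> \<beta>) \<and>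
     distortion P S = cond_V P \<beta> n \<and>
     (\<forall>b\<in>\<beta>. measure P (voronoi S b) > 0)"

end

theory Submission
  imports Defs
begin
lemma U: "uniform_measure lborel {0..1::real} = density lborel (\<lambda>x. ennreal (indicator {0..1::real} x))"
  unfolding uniform_measure_def by (intro density_cong) (auto split: split_indicator)

definition g :: "real \<Rightarrow> real" where "g x = min ((x-1/4)^2) ((x-1/2)^2)"

lemma gcont: "continuous_on UNIV g" unfolding g_def by (intro continuous_intros)

lemma HK: "(g has_integral 37/768) {0..1}"
proof -
  have a: "((\<lambda>x. (x-1/4)^2) has_integral (3/512::real)) {0..3/8}"
  proof -
    have "((\<lambda>x. (x-1/4)^2) has_integral ((3/8-1/4)^3/3 - (0-1/4)^3/3)) {0..3/8::real}"
      by (rule fundamental_theorem_of_calculus) (auto intro!: derivative_eq_intros simp: power2_eq_square power3_eq_cube field_simps)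
    then show ?thesis by (simp add: power3_eq_cube)
  qed
  have b: "((\<lambda>x. (x-1/2)^2) has_integral (65/1536::real)) {3/8..1}"
  proof -
    have "((\<lambda>x. (x-1/2)^2) has_integral ((1-1/2)^3/3 - (3/8-1/2)^3/3)) {3/8..1::real}"
      by (rule fundamental_theorem_of_calculus) (auto intro!: derivative_eq_intros simp: power2_eq_square power3_eq_cube field_simps)
    then show ?thesis by (simp add: power3_eq_cube)
  qed
  have a': "(g has_integral (3/512::real)) {0..3/8}"
    by (rule has_integral_eq[OF _ a]) (auto simp: g_def min_def power2_eq_square algebra_simps)
  have b': "(g has_integral (65/1536::real)) {3/8..1}"
    by (rule has_integral_eq[OF _ b]) (auto simp: g_def min_def power2_eq_square algebra_simps)
  have "(g has_integral (3/512 + 65/1536::real)) {0..1}"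
    by (rule has_integral_combine[OF _ _ a' b']) auto
  then show ?thesis by (simp add: power3_eq_cube)
qed

lemma dist: "distortion (uniform_measure lborel {0..1::real}) {1/4, 1/2} = 37/768"
proof -
  have m: "(\<lambda>x. Min ((\<lambda>a. (x - a)\<^sup>2) ` {1/4, 1/2::real})) = g"
    by (auto simp: g_def fun_eq_iff)
  have gm: "g \<in> borel_measurable borel" using gcont by (simp add: borel_measurable_continuous_onI)
  have si: "set_integrable lborel {0..1} g"
    by (rule borel_integrable_atLeastAtMost') (use gcont continuous_on_subset in blast)
  have "distortion (uniform_measure lborel {0..1::real}) {1/4, 1/2} = (\<integral>x. indicator {0..1} x *\<^sub>R g x \<partial>lborel)"
    unfolding distortion_def m U
    by (rule integral_density) (auto simp: gm)
  also have "\<dots> = (LINT x : {0..1} | lborel. g x)" by (simp add: set_lebesgue_integral_def)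
  also have "\<dots> = integral {0..1} g" by (rule set_borel_integral_eq_integral(2)[OF si])
  also have "\<dots> = 37/768" using HK by (rule integral_unique)
  finally show ?thesis .
qed

lemma v1: "voronoi {1/4, 1/2} (1/4) = {..3/8}"
  unfolding voronoi_def by (auto simp: abs_if)
lemma v2: "voronoi {1/4, 1/2} (1/2) = {3/8..}"
  unfolding voronoi_def by (auto simp: abs_if)
lemma m1: "measure (uniform_measure lborel {0..1::real}) {..3/8} = 3/8"
proof -
  have "{0..1::real} \<inter> {..3/8} = {0..3/8}" by auto
  then show ?thesis by (subst measure_uniform_measure) auto
qed
lemma m2: "measure (uniform_measure lborel {0..1::real}) {3/8..} = 5/8"
proof -
  have "{0..1::real} \<inter> {3/8..} = {3/8..1}" by auto
  then show ?thesis by (subst measure_uniform_measure) auto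
qed

theorem proposition3p1:
  defines "P \<equiv> uniform_measure lborel {0..1::real}"
      and "\<beta> \<equiv> {1/4, 1/2 :: real}"
  shows "{S. cond_optimal_set P \<beta> 2 S} = {\<beta>} \<and> cond_V P \<beta> 2 = 37/768"
proof -
  have cb: "card \<beta> = 2" "finite \<beta>" unfolding \<beta>_def by auto
  have A: "{\<alpha>::real set. finite \<alpha> \<and> card \<alpha> \<le> 2 - card \<beta>} = {{}}"
    using cb by auto
  have V: "cond_V P \<beta> 2 = 37/768"
    unfolding cond_V_def A using dist unfolding P_def \<beta>_def by simp
  have "cond_optimal_set P \<beta> 2 S \<longleftrightarrow> S = \<beta>" for S
  proof
    assume "cond_optimal_set P \<beta> 2 S"
    then show "S = \<beta>" unfolding cond_optimal_set_def using cb by auto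
  next
    assume S: "S = \<beta>"
    have "\<forall>b\<in>\<beta>. measure P (voronoi S b) > 0"
      unfolding S \<beta>_def P_def using v1 v2 m1 m2 by simp
    moreover have "distortion P S = cond_V P \<beta> 2"
      using V dist unfolding S P_def \<beta>_def by simp
    moreover have "\<exists>\<alpha>. finite \<alpha> \<and> card \<alpha> \<le> 2 - card \<beta> \<and> S = \<alpha> \<union> \<beta>"
      using S by (intro exI[of _ "{}"]) auto
    ultimately show "cond_optimal_set P \<beta> 2 S" unfolding cond_optimal_set_def using cb by auto
  qed
  then show ?thesis using V by auto
qed

end
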